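(* There is an absolute constant $c>0$ such that the following holds. Let $q,p$ be positive integers with $q/2<p<2q$, let $W\subseteq\{0,1,\dots,q-1\}$, and let $b_1,b_2$ be integers with $\gcd(b_1,q)=\gcd(b_2,p)=1$. Then $$\sum_{a\in\mathbb{Z},\ |a|<q/2}\left|f_W\left(\frac{b_1a}{q}\right)\right|\,\left|f_W\left(\frac{b_2a}{p}\right)\right|\ \le\ c\, q|W|.$$
   Context: $e(u)=\exp(2\pi i u)$ and, for a finite set of integers $W$, $f_W(t)=\sum_{s\in W}e(st)$. *)

theory Defs
  imports "HOL-Analysis.Analysis"
begin

definition e :: "real \<Rightarrow> complex" where
  "e u = exp (2 * of_real pi * \<i> * of_real u)"

definition fW :: "int set \<Rightarrow> real \<Rightarrow> complex" where
  "fW W t = (\<Sum>s\<in>W. e (of_int s * t))"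

end

theory Submission imports Defs begin

lemma e_add: "e (u + v) = e u * e v"
  unfolding e_def by (simp add: distrib_left distrib_right exp_add)

lemma e_int: "e (of_int k) = 1"
  unfolding e_def by (simp add: mult_ac)

lemma e_eq_1_iff: "e u = 1 \<longleftrightarrow> (\<exists>k::int. u = of_int k)"
proof
  assume "e u = 1"
  then have "exp (complex_of_real (2*pi*u) * \<i>) = 1" unfolding e_def by (simp add: mult_ac)
  then obtain n::int where "2*pi*u = of_int (2*n) * pi" unfolding exp_eq_1 by auto
  then have "u = of_int n" by simp
  then show "\<exists>k::int. u = of_int k" by blast
qed (auto simp: e_int)

lemma e_pow: "e u ^ n = e (of_nat n * u)"
  unfolding e_def by (simp add: exp_of_nat_mult[symmetric] mult_ac)

lemma e_cnj: "cnj (e u) = e (- u)"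
  unfolding e_def by (simp add: exp_cnj)

lemma geo:
  fixes d :: int and n :: nat
  assumes "n > 0"
  shows "(\<Sum>r<n. e (of_int d * of_nat r / of_nat n)) = (if int n dvd d then of_nat n else 0)"
proof -
  have eq: "e (of_int d * of_nat r / of_nat n) = e (of_int d / of_nat n) ^ r" for r
    by (simp add: e_pow mult_ac)
  have pn: "e (of_int d / of_nat n) ^ n = 1"
    using assms by (simp add: e_pow e_int)
  have c1: "e (of_int d / of_nat n) = 1 \<longleftrightarrow> int n dvd d"
  proof
    assume "e (of_int d / of_nat n) = 1"
    then obtain k::int where "real_of_int d / real n = of_int k" using e_eq_1_iff by blast
    then have "real_of_int d = real_of_int (int n * k)" using assms by (simp add: field_simps)
    then have "d = int n * k" by linarith
    then show "int n dvd d" by simp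
  next
    assume "int n dvd d"
    then obtain k where "d = int n * k" by blast
    then have "real_of_int d / real n = of_int k" using assms by simp
    then show "e (of_int d / of_nat n) = 1" by (simp add: e_int)
  qed
  show ?thesis unfolding eq sum_gp_strict using pn c1 by auto
qed


lemma parseval:
  fixes W :: "int set" and n :: nat
  assumes "finite W" "n > 0"
  shows "(\<Sum>r<n. (cmod (fW W (real r / real n)))^2) = real n * real (card {p \<in> W \<times> W. int n dvd fst p - snd p})"
proof -
  have "complex_of_real (\<Sum>r<n. (cmod (fW W (real r / real n)))^2)
      = (\<Sum>r<n. fW W (real r / real n) * cnj (fW W (real r / real n)))"
    by (simp only: of_real_sum complex_norm_square)
  also have "\<dots> = (\<Sum>r<n. \<Sum>s\<in>W. \<Sum>s'\<in>W. e (of_int (s - s') * of_nat r / of_nat n))"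
    unfolding fW_def
    apply (simp add: sum_distrib_left sum_distrib_right e_cnj e_add[symmetric] algebra_simps diff_divide_distrib)
    apply (rule sum.cong[OF refl])
    apply (rule sum.swap)
    done
  also have "\<dots> = (\<Sum>s\<in>W. \<Sum>s'\<in>W. \<Sum>r<n. e (of_int (s - s') * of_nat r / of_nat n))"
    by (subst sum.swap) (simp add: sum.swap[of _ "{..<n}"])
  also have "\<dots> = (\<Sum>s\<in>W. \<Sum>s'\<in>W. (if int n dvd s - s' then of_nat n else 0))"
    by (intro sum.cong refl) (rule geo[OF assms(2)])
  also have "\<dots> = (\<Sum>p\<in>W\<times>W. (if int n dvd fst p - snd p then of_nat n else 0))"
    by (simp add: sum.cartesian_product case_prod_beta)
  also have "\<dots> = of_nat n * of_nat (card {p \<in> W \<times> W. int n dvd fst p - snd p})"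
  proof -
    have "W \<times> W \<inter> {p. int n dvd fst p - snd p} = {p \<in> W \<times> W. int n dvd fst p - snd p}" by blast
    then show ?thesis using assms by (simp add: sum.If_cases)
  qed
  also have "\<dots> = complex_of_real (real n * real (card {p \<in> W \<times> W. int n dvd fst p - snd p}))"
    by simp
  finally show ?thesis
    by (simp only: of_real_eq_iff)
qed

lemma fW_mod:
  fixes x :: int and n :: nat
  assumes "n > 0"
  shows "fW W (of_int x / real n) = fW W (real (nat (x mod int n)) / real n)"
proof -
  have "e (of_int s * (of_int x / real n)) = e (of_int s * (real (nat (x mod int n)) / real n))" for s
  proof -
    have x: "x = int n * (x div int n) + x mod int n" by simp
    have "of_int s * (of_int x / real n) = of_int (s * (x div int n)) + of_int s * (real (nat (x mod int n)) / real n)"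
    proof -
      have "real_of_int x = real n * of_int (x div int n) + of_int (x mod int n)"
        by (metis of_int_add of_int_mult of_int_of_nat_eq x)
      then show ?thesis using assms by (simp add: field_simps)
    qed
    moreover have "e (of_int s * of_int (x div int n)) = 1" using e_int[of "s * (x div int n)"] by simp
    ultimately show ?thesis by (simp add: e_add)
  qed
  then show ?thesis unfolding fW_def by simp
qed

lemma inj_sum_le:
  fixes g :: "nat \<Rightarrow> real"
  assumes "inj_on h B" "h ` B \<subseteq> {..<n}" "\<And>r. g r \<ge> 0"
  shows "(\<Sum>a\<in>B. g (h a)) \<le> (\<Sum>r<n. g r)"
proof -
  have "(\<Sum>a\<in>B. g (h a)) = (\<Sum>r\<in>h ` B. g r)" using assms(1) by (simp add: sum.reindex)
  also have "\<dots> \<le> (\<Sum>r<n. g r)" using assms by (intro sum_mono2) auto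
  finally show ?thesis .
qed

lemma mod_inj:
  fixes a a' b m :: int
  assumes "m > 0" "gcd b m = 1" "\<bar>a - a'\<bar> < m" "(b*a) mod m = (b*a') mod m"
  shows "a = a'"
proof -
  have "m dvd b * (a - a')" using assms(4) by (metis mod_eq_dvd_iff right_diff_distrib)
  then have "m dvd a - a'" using assms(2) by (metis coprime_dvd_mult_right_iff gcd.commute is_unit_gcd
      coprime_iff_gcd_eq_1)
  then obtain k where k: "a - a' = m * k" by blast
  have "k = 0"
  proof (rule ccontr)
    assume "k \<noteq> 0"
    then have "\<bar>k\<bar> \<ge> 1" by simp
    then have "m * \<bar>k\<bar> \<ge> m" using assms(1) by simp
    then show False using assms(1,3) k by (simp add: abs_mult)
  qed
  then show ?thesis using k by simp
qed


lemma sum_sq_bound: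
  fixes W B :: "int set" and n :: nat and b :: int
  assumes "n > 0" "finite W" "gcd b (int n) = 1" "finite B"
    "\<And>a a'. a \<in> B \<Longrightarrow> a' \<in> B \<Longrightarrow> \<bar>a - a'\<bar> < int n"
  shows "(\<Sum>a\<in>B. (cmod (fW W (of_int (b*a) / real n)))^2) \<le> real n * real (card {p \<in> W \<times> W. int n dvd fst p - snd p})"
proof -
  define h where "h a = nat ((b*a) mod int n)" for a
  define g where "g r = (cmod (fW W (real r / real n)))^2" for r
  have "(\<Sum>a\<in>B. (cmod (fW W (of_int (b*a) / real n)))^2) = (\<Sum>a\<in>B. g (h a))"
    unfolding g_def h_def by (intro sum.cong refl) (simp only: fW_mod[OF assms(1)])
  also have "\<dots> \<le> (\<Sum>r<n. g r)"
  proof (rule inj_sum_le)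
    show "inj_on h B"
    proof (rule inj_onI)
      fix a a' assume "a \<in> B" "a' \<in> B" "h a = h a'"
      then have "(b*a) mod int n = (b*a') mod int n" unfolding h_def using assms(1)
        by (metis int_nat_eq of_nat_0_less_iff pos_mod_sign)
      then show "a = a'" using mod_inj[of "int n" b a a'] assms(1,3,5) \<open>a \<in> B\<close> \<open>a' \<in> B\<close> by simp
    qed
    show "h ` B \<subseteq> {..<n}" unfolding h_def using assms(1)
      by (auto simp: nat_less_iff)
    show "\<And>r. 0 \<le> g r" unfolding g_def by simp
  qed
  also have "\<dots> = real n * real (card {p \<in> W \<times> W. int n dvd fst p - snd p})"
    unfolding g_def using parseval[OF assms(2,1)] by simp
  finally show ?thesis .
qed

lemma card_pairs1:
  fixes W :: "int set" and n :: nat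
  assumes "W \<subseteq> {0..int n - 1}" "n > 0"
  shows "card {p \<in> W \<times> W. int n dvd fst p - snd p} \<le> card W"
proof -
  have fin: "finite W" using assms(1) finite_subset by blast
  have "{p \<in> W \<times> W. int n dvd fst p - snd p} \<subseteq> (\<lambda>s. (s, s)) ` W"
  proof
    fix x assume x: "x \<in> {p \<in> W \<times> W. int n dvd fst p - snd p}"
    obtain s s' where ss: "x = (s, s')" by fastforce
    have "(1 * s) mod int n = (1 * s') mod int n" using x ss by (simp add: mod_eq_dvd_iff)
    moreover have "\<bar>s - s'\<bar> < int n"
    proof -
      have "s \<in> {0..int n - 1}" "s' \<in> {0..int n - 1}" using x ss assms(1) by auto
      then show ?thesis by (simp add: abs_less_iff)
    qed
    ultimately have "s = s'" using mod_inj[of "int n" 1 s s'] assms(2) by simp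
    then show "x \<in> (\<lambda>s. (s, s)) ` W" using x ss by auto
  qed
  then have "card {p \<in> W \<times> W. int n dvd fst p - snd p} \<le> card ((\<lambda>s. (s, s)) ` W)"
    using fin by (intro card_mono) auto
  also have "\<dots> \<le> card W" by (rule card_image_le[OF fin])
  finally show ?thesis .
qed

lemma card_pairs2:
  fixes W :: "int set" and n :: nat
  assumes "W \<subseteq> {0..<2 * int n}" "n > 0"
  shows "card {p \<in> W \<times> W. int n dvd fst p - snd p} \<le> 2 * card W"
proof -
  have fin: "finite W" using assms(1) finite_subset by blast
  define F where "F = (\<lambda>(s::int, j::int). (s, s mod int n + int n * j))"
  have "{p \<in> W \<times> W. int n dvd fst p - snd p} \<subseteq> F ` (W \<times> {0, 1})"
  proof
    fix x assume x: "x \<in> {p \<in> W \<times> W. int n dvd fst p - snd p}"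
    obtain s s' where ss: "x = (s, s')" by fastforce
    have m: "s' mod int n = s mod int n" using x ss by (simp add: mod_eq_dvd_iff dvd_diff_commute)
    have s'r: "0 \<le> s'" "s' < 2 * int n" using x ss assms(1) by auto
    have d0: "0 \<le> s' div int n" using s'r(1) by (simp add: pos_imp_zdiv_nonneg_iff assms(2))
    have d1: "s' div int n < 2"
    proof (rule ccontr)
      assume "\<not> s' div int n < 2"
      then have "int n * 2 \<le> int n * (s' div int n)" by (intro mult_left_mono) auto
      moreover have "int n * (s' div int n) + s' mod int n = s'" by simp
      moreover have "0 \<le> s' mod int n" using assms(2) by simp
      ultimately show False using s'r by linarith
    qed
    have "s' = s' mod int n + int n * (s' div int n)" by simp
    then have "x = F (s, s' div int n)" unfolding F_def using ss m by simp
    moreover have "s' div int n \<in> {0, 1}" using d0 d1 by auto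
    ultimately show "x \<in> F ` (W \<times> {0, 1})" using x ss by auto
  qed
  then have "card {p \<in> W \<times> W. int n dvd fst p - snd p} \<le> card (F ` (W \<times> {0, 1}))"
    using fin by (intro card_mono) auto
  also have "\<dots> \<le> card (W \<times> {0::int, 1})" by (rule card_image_le) (simp add: fin)
  also have "\<dots> = 2 * card W" by (simp add: card_cartesian_product)
  finally show ?thesis .
qed


lemma final_arith:
  fixes P w Q :: real
  assumes "P * w \<le> 2 * Q * w" "0 \<le> Q * w"
  shows "(Q * w + 4 * P * w) / 2 \<le> 5 * Q * w"
  using assms by (simp add: algebra_simps)

theorem corollary2:
  "\<exists>c::real. c > 0 \<and>
    (\<forall>(q::int) (p::int) (W::int set) (b1::int) (b2::int).
       q > 0 \<longrightarrow> p > 0 \<longrightarrow> real_of_int q / 2 < real_of_int p \<longrightarrow> p < 2 * q \<longrightarrow>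
       W \<subseteq> {0..q-1} \<longrightarrow> gcd b1 q = 1 \<longrightarrow> gcd b2 p = 1 \<longrightarrow>
       (\<Sum>a\<in>{a::int. \<bar>real_of_int a\<bar> < real_of_int q / 2}.
          cmod (fW W (real_of_int (b1 * a) / real_of_int q)) *
          cmod (fW W (real_of_int (b2 * a) / real_of_int p)))
       \<le> c * real_of_int q * real (card W))"
proof (intro exI[of _ 5] conjI allI impI)
  fix q p :: int and W :: "int set" and b1 b2 :: int
  assume q0: "q > 0" and p0: "p > 0" and qp: "real_of_int q / 2 < real_of_int p" and pq: "p < 2 * q"
    and Wq: "W \<subseteq> {0..q-1}" and g1: "gcd b1 q = 1" and g2: "gcd b2 p = 1"
  define A where "A = {a::int. \<bar>real_of_int a\<bar> < real_of_int q / 2}"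
  define n1 where "n1 = nat q"
  define n2 where "n2 = nat p"
  have n1: "int n1 = q" "real n1 = real_of_int q" "n1 > 0" using q0 unfolding n1_def by auto
  have n2: "int n2 = p" "real n2 = real_of_int p" "n2 > 0" using p0 unfolding n2_def by auto
  have qp': "q < 2 * p" using qp by linarith
  have Aiff: "a \<in> A \<longleftrightarrow> 2 * \<bar>a\<bar> < q" for a
  proof -
    have "a \<in> A \<longleftrightarrow> real_of_int (2 * \<bar>a\<bar>) < real_of_int q" unfolding A_def by auto
    then show ?thesis by (simp only: of_int_less_iff)
  qed
  have finA: "finite A"
  proof (rule finite_subset)
    show "A \<subseteq> {-q..q}" using Aiff by (auto simp: abs_if split: if_splits)
  qed simp
  have finW: "finite W" using Wq finite_subset by blast
  define X where "X a = cmod (fW W (real_of_int (b1 * a) / real_of_int q))" for a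
  define Y where "Y a = cmod (fW W (real_of_int (b2 * a) / real_of_int p))" for a
  define w where "w = real (card W)"
  have w0: "w \<ge> 0" unfolding w_def by simp
  have SX: "(\<Sum>a\<in>A. (X a)^2) \<le> real_of_int q * w"
  proof -
    have "(\<Sum>a\<in>A. (X a)^2) \<le> real n1 * real (card {p \<in> W \<times> W. int n1 dvd fst p - snd p})"
      unfolding X_def n1(2)[symmetric]
    proof (rule sum_sq_bound[OF n1(3) finW _ finA])
      show "gcd b1 (int n1) = 1" using g1 n1(1) by simp
      fix a a' assume "a \<in> A" "a' \<in> A"
      then have "2 * \<bar>a\<bar> < q" "2 * \<bar>a'\<bar> < q" using Aiff by auto
      then show "\<bar>a - a'\<bar> < int n1" using n1(1) by arith
    qed
    also have "\<dots> \<le> real n1 * w"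
    proof -
      have c1: "card {p \<in> W \<times> W. int n1 dvd fst p - snd p} \<le> card W"
        by (rule card_pairs1) (use Wq n1 in auto)
      show ?thesis unfolding w_def using c1 by (intro mult_left_mono) auto
    qed
    finally show ?thesis using n1 by simp
  qed
  have SY: "(\<Sum>a\<in>A. (Y a)^2) \<le> 4 * real_of_int p * w"
  proof -
    define A1 where "A1 = {a \<in> A. a < 0}"
    define A2 where "A2 = {a \<in> A. \<not> a < 0}"
    have cp: "real (card {p \<in> W \<times> W. int n2 dvd fst p - snd p}) \<le> 2 * w"
    proof -
      have "W \<subseteq> {0..<2 * int n2}" using Wq qp' n2 by auto
      then show ?thesis unfolding w_def using card_pairs2[of W n2] n2 by linarith
    qed
    have bnd: "(\<Sum>a\<in>B. (Y a)^2) \<le> 2 * real_of_int p * w"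
      if B: "B \<subseteq> A" "\<And>a a'. a \<in> B \<Longrightarrow> a' \<in> B \<Longrightarrow> \<bar>a - a'\<bar> < p" for B
    proof -
      have "(\<Sum>a\<in>B. (Y a)^2) \<le> real n2 * real (card {p \<in> W \<times> W. int n2 dvd fst p - snd p})"
        unfolding Y_def n2(2)[symmetric]
      proof (rule sum_sq_bound[OF n2(3) finW])
        show "gcd b2 (int n2) = 1" using g2 n2(1) by simp
        show "finite B" using finA B(1) finite_subset by blast
        fix a a' assume "a \<in> B" "a' \<in> B"
        then show "\<bar>a - a'\<bar> < int n2" using B(2) n2(1) by simp
      qed
      also have "\<dots> \<le> real n2 * (2 * w)" using cp by (intro mult_left_mono) auto
      finally show ?thesis using n2 by simp
    qed
    have "A = A1 \<union> A2" unfolding A1_def A2_def by auto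
    moreover have "A1 \<inter> A2 = {}" unfolding A1_def A2_def by auto
    moreover have "finite A1" "finite A2" unfolding A1_def A2_def using finA by auto
    ultimately have "(\<Sum>a\<in>A. (Y a)^2) = (\<Sum>a\<in>A1. (Y a)^2) + (\<Sum>a\<in>A2. (Y a)^2)"
      by (simp add: sum.union_disjoint)
    also have "\<dots> \<le> 2 * real_of_int p * w + 2 * real_of_int p * w"
    proof (rule add_mono)
      show "(\<Sum>a\<in>A1. (Y a)^2) \<le> 2 * real_of_int p * w"
      proof (rule bnd)
        show "A1 \<subseteq> A" unfolding A1_def by auto
        fix a a' assume "a \<in> A1" "a' \<in> A1"
        then have "2 * \<bar>a\<bar> < q" "2 * \<bar>a'\<bar> < q" "a < 0" "a' < 0" unfolding A1_def using Aiff by auto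
        then show "\<bar>a - a'\<bar> < p" using qp' by arith
      qed
      show "(\<Sum>a\<in>A2. (Y a)^2) \<le> 2 * real_of_int p * w"
      proof (rule bnd)
        show "A2 \<subseteq> A" unfolding A2_def by auto
        fix a a' assume "a \<in> A2" "a' \<in> A2"
        then have "2 * \<bar>a\<bar> < q" "2 * \<bar>a'\<bar> < q" "a \<ge> 0" "a' \<ge> 0" unfolding A2_def using Aiff by auto
        then show "\<bar>a - a'\<bar> < p" using qp' by arith
      qed
    qed
    finally show ?thesis by (simp add: algebra_simps)
  qed
  have "(\<Sum>a\<in>A. X a * Y a) \<le> (\<Sum>a\<in>A. ((X a)^2 + (Y a)^2) / 2)"
  proof (rule sum_mono)
    fix a
    have "0 \<le> (X a - Y a)^2" by simp
    then show "X a * Y a \<le> ((X a)^2 + (Y a)^2) / 2" by (simp add: power2_eq_square algebra_simps)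
  qed
  also have "\<dots> = ((\<Sum>a\<in>A. (X a)^2) + (\<Sum>a\<in>A. (Y a)^2)) / 2"
    by (simp only: sum_divide_distrib[symmetric] sum.distrib)
  also have "\<dots> \<le> (real_of_int q * w + 4 * real_of_int p * w) / 2"
    using SX SY by simp
  also have "\<dots> \<le> 5 * real_of_int q * w"
  proof -
    have "real_of_int p * w \<le> (2 * real_of_int q) * w"
      using pq w0 by (intro mult_right_mono) auto
    moreover have "0 \<le> real_of_int q * w" using q0 w0 by simp
    ultimately show ?thesis using final_arith[of "real_of_int p" w "real_of_int q"] by blast
  qed
  finally show "(\<Sum>a\<in>{a::int. \<bar>real_of_int a\<bar> < real_of_int q / 2}.
          cmod (fW W (real_of_int (b1 * a) / real_of_int q)) *
          cmod (fW W (real_of_int (b2 * a) / real_of_int p)))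
       \<le> 5 * real_of_int q * real (card W)"
    unfolding A_def X_def Y_def w_def .
qed simp

end
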